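(* Let $G=(V,E)$ be a chordal graph and $T$ a spanning tree of $G$ rooted in $s\in V$. Then $T$ is an $\mathcal L$-tree of LexDFS of $G$ if and only if $T$ is an $\mathcal L$-tree of LexBFS of $G$.
   Context: Graphs are finite, simple, undirected and connected. A graph is chordal if it has no induced cycle of length greater than 3. LexDFS started at $s$: label $s$ with $(0)$, all other vertices with the empty label; for $i=1,\dots,n$ pick an unnumbered vertex $v$ with lexicographically largest label, set $\sigma(i)=v$, and prepend $i$ to the label of each unnumbered neighbor of $v$. LexBFS started at $s$: label $s$ with $(n)$, others empty; same loop but append $n-i$ to the label of each unnumbered neighbor of $v$. Orders of these searches are all possible outputs. The $\mathcal L$-tree of a vertex order $(v_1,\dots,v_n)$ is the spanning tree rooted at $v_1$ with an edge from each $v_i$ ($i>1$) to its rightmost neighbor $v_j$ with $j<i$. A spanning tree $T$ rooted at $s$ is an $\mathcal L$-tree of a search $\mathcal P$ of $G$ if some $\mathcal P$-order of $G$ starting at $s$ has $\mathcal L$-tree $T$. *)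

theory Defs
  imports Main
begin

definition graph :: "'a set \<Rightarrow> ('a \<Rightarrow> 'a \<Rightarrow> bool) \<Rightarrow> bool" where
  "graph V E \<longleftrightarrow> finite V \<and> V \<noteq> {} \<and>
     (\<forall>u v. E u v \<longrightarrow> u \<in> V \<and> v \<in> V) \<and>
     (\<forall>u v. E u v \<longrightarrow> E v u) \<and> (\<forall>v. \<not> E v v) \<and>
     (\<forall>u\<in>V. \<forall>v\<in>V. E\<^sup>*\<^sup>* u v)"

definition induced_cycle :: "'a set \<Rightarrow> ('a \<Rightarrow> 'a \<Rightarrow> bool) \<Rightarrow> 'a list \<Rightarrow> bool" where
  "induced_cycle V E cs \<longleftrightarrow> distinct cs \<and> set cs \<subseteq> V \<and> length cs \<ge> 3 \<and>
     (\<forall>i < length cs. E (cs ! i) (cs ! ((i + 1) mod length cs))) \<and>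
     (\<forall>i < length cs. \<forall>j < length cs. E (cs ! i) (cs ! j) \<longrightarrow>
        j = (i + 1) mod length cs \<or> i = (j + 1) mod length cs)"

definition chordal :: "'a set \<Rightarrow> ('a \<Rightarrow> 'a \<Rightarrow> bool) \<Rightarrow> bool" where
  "chordal V E \<longleftrightarrow> (\<forall>cs. induced_cycle V E cs \<longrightarrow> length cs \<le> 3)"

text \<open>Lexicographic strict order on labels (proper prefixes are smaller).\<close>
definition lex_less :: "nat list \<Rightarrow> nat list \<Rightarrow> bool" where
  "lex_less xs ys \<longleftrightarrow> (xs, ys) \<in> lexord {(a, b). a < b}"

text \<open>Labels after the first i vertices of the order \<sigma> have been numbered
  (the vertex \<sigma>!i gets number Suc i).\<close>
primrec lexdfs_label :: "('a \<Rightarrow> 'a \<Rightarrow> bool) \<Rightarrow> 'a \<Rightarrow> 'a list \<Rightarrow> nat \<Rightarrow> 'a \<Rightarrow> nat list" where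
  "lexdfs_label E s \<sigma> 0 v = (if v = s then [0] else [])"
| "lexdfs_label E s \<sigma> (Suc i) v =
     (if E (\<sigma> ! i) v \<and> v \<notin> set (take (Suc i) \<sigma>)
      then Suc i # lexdfs_label E s \<sigma> i v else lexdfs_label E s \<sigma> i v)"

primrec lexbfs_label :: "('a \<Rightarrow> 'a \<Rightarrow> bool) \<Rightarrow> 'a \<Rightarrow> nat \<Rightarrow> 'a list \<Rightarrow> nat \<Rightarrow> 'a \<Rightarrow> nat list" where
  "lexbfs_label E s n \<sigma> 0 v = (if v = s then [n] else [])"
| "lexbfs_label E s n \<sigma> (Suc i) v =
     (if E (\<sigma> ! i) v \<and> v \<notin> set (take (Suc i) \<sigma>)
      then lexbfs_label E s n \<sigma> i v @ [n - Suc i] else lexbfs_label E s n \<sigma> i v)"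

definition search_order :: "'a set \<Rightarrow> (nat \<Rightarrow> 'a \<Rightarrow> nat list) \<Rightarrow> 'a list \<Rightarrow> bool" where
  "search_order V lab \<sigma> \<longleftrightarrow> distinct \<sigma> \<and> set \<sigma> = V \<and>
     (\<forall>i < length \<sigma>. \<forall>w \<in> V - set (take i \<sigma>). \<not> lex_less (lab i (\<sigma> ! i)) (lab i w))"

definition lexdfs_order :: "'a set \<Rightarrow> ('a \<Rightarrow> 'a \<Rightarrow> bool) \<Rightarrow> 'a \<Rightarrow> 'a list \<Rightarrow> bool" where
  "lexdfs_order V E s \<sigma> \<longleftrightarrow> search_order V (lexdfs_label E s \<sigma>) \<sigma>"

definition lexbfs_order :: "'a set \<Rightarrow> ('a \<Rightarrow> 'a \<Rightarrow> bool) \<Rightarrow> 'a \<Rightarrow> 'a list \<Rightarrow> bool" where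
  "lexbfs_order V E s \<sigma> \<longleftrightarrow> search_order V (lexbfs_label E s (card V) \<sigma>) \<sigma>"

definition L_tree :: "('a \<Rightarrow> 'a \<Rightarrow> bool) \<Rightarrow> 'a list \<Rightarrow> 'a set set" where
  "L_tree E \<sigma> = {{\<sigma> ! i, \<sigma> ! (GREATEST j. j < i \<and> E (\<sigma> ! i) (\<sigma> ! j))} | i. 0 < i \<and> i < length \<sigma>}"

definition spanning_tree :: "'a set \<Rightarrow> ('a \<Rightarrow> 'a \<Rightarrow> bool) \<Rightarrow> 'a set set \<Rightarrow> bool" where
  "spanning_tree V E T \<longleftrightarrow> (\<forall>e \<in> T. \<exists>u v. e = {u, v} \<and> E u v) \<and>
     (\<forall>u\<in>V. \<forall>v\<in>V. (\<lambda>x y. {x, y} \<in> T)\<^sup>*\<^sup>* u v) \<and> card T = card V - 1"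

definition is_L_tree_of_LexDFS :: "'a set \<Rightarrow> ('a \<Rightarrow> 'a \<Rightarrow> bool) \<Rightarrow> 'a \<Rightarrow> 'a set set \<Rightarrow> bool" where
  "is_L_tree_of_LexDFS V E s T \<longleftrightarrow>
     (\<exists>\<sigma>. lexdfs_order V E s \<sigma> \<and> \<sigma> ! 0 = s \<and> L_tree E \<sigma> = T)"

definition is_L_tree_of_LexBFS :: "'a set \<Rightarrow> ('a \<Rightarrow> 'a \<Rightarrow> bool) \<Rightarrow> 'a \<Rightarrow> 'a set set \<Rightarrow> bool" where
  "is_L_tree_of_LexBFS V E s T \<longleftrightarrow>
     (\<exists>\<sigma>. lexbfs_order V E s \<sigma> \<and> \<sigma> ! 0 = s \<and> L_tree E \<sigma> = T)"

end

theory Submission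
  imports Defs "HOL-Library.List_Lexorder"
begin

lemma lex_less_iff: "lex_less xs ys \<longleftrightarrow> xs < ys"
  by (simp add: lex_less_def list_less_def)

lemma sorted_le:
  fixes xs ys :: "nat list"
  assumes "sorted_wrt (>) xs" "sorted_wrt (>) ys" "set xs \<subseteq> set ys"
  shows "xs \<le> ys"
  using assms
proof (induction ys arbitrary: xs)
  case Nil then show ?case by simp
next
  case (Cons y ys)
  show ?case
  proof (cases xs)
    case Nil then show ?thesis by (simp add: list_le_def list_less_def)
  next
    case (Cons x xs')
    have xy: "x \<le> y" using Cons.prems Cons by auto
    show ?thesis
    proof (cases "x = y")
      case True
      have "set xs' \<subseteq> set ys" using Cons.prems Cons True by auto
      then have "xs' \<le> ys" using Cons.IH Cons.prems Cons by auto
      then show ?thesis using True Cons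
        by (auto simp add: list_le_def list_less_def)
    next
      case False
      then have "x < y" using xy by simp
      then show ?thesis using Cons
        by (auto simp add: list_le_def list_less_def)
    qed
  qed
qed

lemma sorted_less:
  fixes xs ys :: "nat list"
  assumes "sorted_wrt (>) xs" "sorted_wrt (>) ys" "set xs \<subset> set ys"
  shows "xs < ys"
  using sorted_le[OF assms(1,2)] assms(3) by (auto simp: order.order_iff_strict)

lemma dfs_label_eq:
  "v \<notin> set (take i \<sigma>) \<Longrightarrow> lexdfs_label E s \<sigma> i v =
     map Suc (filter (\<lambda>j. E (\<sigma>!j) v) (rev [0..<i])) @ (if v = s then [0] else [])"
proof (induction i)
  case 0 then show ?case by simp
next
  case (Suc i)
  have "v \<notin> set (take i \<sigma>)" using Suc.prems
    by (meson in_set_takeD set_take_subset_set_take le_SucI order_refl subsetD)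
  then show ?case using Suc by auto
qed

lemma bfs_label_eq:
  "v \<notin> set (take i \<sigma>) \<Longrightarrow> lexbfs_label E s n \<sigma> i v =
     (if v = s then [n] else []) @ map (\<lambda>j. n - Suc j) (filter (\<lambda>j. E (\<sigma>!j) v) [0..<i])"
proof (induction i)
  case 0 then show ?case by simp
next
  case (Suc i)
  have "v \<notin> set (take i \<sigma>)" using Suc.prems
    by (meson set_take_subset_set_take le_SucI order_refl subsetD)
  then show ?case using Suc by auto
qed

definition Nb :: "('a \<Rightarrow> 'a \<Rightarrow> bool) \<Rightarrow> 'a list \<Rightarrow> nat \<Rightarrow> 'a \<Rightarrow> nat set" where
  "Nb E \<sigma> i v = {j. j < i \<and> E (\<sigma>!j) v}"

lemma mono_gen:
  fixes f :: "nat \<Rightarrow> nat" and A B :: "nat set" and xs ys :: "nat list"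
  assumes inj: "inj_on f {..<i}" and A: "A \<subseteq> {..<i}" and B: "B \<subseteq> {..<i}"
    and sx: "sorted_wrt (>) xs" and sy: "sorted_wrt (>) ys" and ex: "set xs = f ` A" and ey: "set ys = f ` B"
  shows "(A \<subseteq> B \<longrightarrow> xs \<le> ys) \<and> (A \<subset> B \<longrightarrow> xs < ys)"
proof -
  have iff: "f ` A' \<subseteq> f ` B' \<Longrightarrow> A' \<subseteq> B'" if "A' \<subseteq> {..<i}" "B' \<subseteq> {..<i}" for A' B'
    using inj_on_image_mem_iff[OF inj] that by blast
  show ?thesis
  proof (intro conjI impI)
    assume "A \<subseteq> B"
    then have "set xs \<subseteq> set ys" unfolding ex ey by (rule image_mono)
    then show "xs \<le> ys" by (rule sorted_le[OF sx sy])
  next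
    assume AB: "A \<subset> B"
    have "set xs \<subseteq> set ys" unfolding ex ey using AB by (intro image_mono) blast
    moreover have "\<not> set ys \<subseteq> set xs"
    proof
      assume "set ys \<subseteq> set xs"
      then have "B \<subseteq> A" using iff[OF B A] unfolding ex ey by blast
      then show False using AB by blast
    qed
    ultimately have "set xs \<subset> set ys" by blast
    then show "xs < ys" by (rule sorted_less[OF sx sy])
  qed
qed

lemma dfs_mono:
  assumes "u \<notin> set (take i \<sigma>)" "w \<notin> set (take i \<sigma>)" "u \<noteq> s" "w \<noteq> s"
  shows "(Nb E \<sigma> i u \<subseteq> Nb E \<sigma> i w \<longrightarrow> lexdfs_label E s \<sigma> i u \<le> lexdfs_label E s \<sigma> i w) \<and>
         (Nb E \<sigma> i u \<subset> Nb E \<sigma> i w \<longrightarrow> lexdfs_label E s \<sigma> i u < lexdfs_label E s \<sigma> i w)"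
proof -
  have st: "sorted_wrt (>) (map Suc (filter P (rev [0..<i])))" for P
    by (simp add: sorted_wrt_map sorted_wrt_filter sorted_wrt_rev sorted_wrt_upt)
  have se: "set (map Suc (filter (\<lambda>j. E (\<sigma>!j) x) (rev [0..<i]))) = Suc ` Nb E \<sigma> i x" for x
    by (auto simp: Nb_def)
  have sub: "Nb E \<sigma> i x \<subseteq> {..<i}" for x by (auto simp: Nb_def)
  have inj: "inj_on Suc {..<i}" by simp
  show ?thesis
    using mono_gen[OF inj sub sub st st se se] assms by (simp add: dfs_label_eq)
qed

lemma bfs_mono:
  assumes "u \<notin> set (take i \<sigma>)" "w \<notin> set (take i \<sigma>)" "u \<noteq> s" "w \<noteq> s" "i \<le> n"
  shows "(Nb E \<sigma> i u \<subseteq> Nb E \<sigma> i w \<longrightarrow> lexbfs_label E s n \<sigma> i u \<le> lexbfs_label E s n \<sigma> i w) \<and>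
         (Nb E \<sigma> i u \<subset> Nb E \<sigma> i w \<longrightarrow> lexbfs_label E s n \<sigma> i u < lexbfs_label E s n \<sigma> i w)"
proof -
  have st: "sorted_wrt (>) (map (\<lambda>j. n - Suc j) (filter P [0..<i]))" for P
    unfolding sorted_wrt_map
    by (rule sorted_wrt_filter, rule sorted_wrt_mono_rel[of _ "(<)"])
       (use assms(5) in \<open>auto simp: sorted_wrt_upt\<close>)
  have inj: "inj_on (\<lambda>j. n - Suc j) {..<i}"
    using assms(5) by (auto simp: inj_on_def)
  have se: "set (map (\<lambda>j. n - Suc j) (filter (\<lambda>j. E (\<sigma>!j) x) [0..<i])) = (\<lambda>j. n - Suc j) ` Nb E \<sigma> i x" for x
    by (auto simp: Nb_def)
  have sub: "Nb E \<sigma> i x \<subseteq> {..<i}" for x by (auto simp: Nb_def)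
  show ?thesis
    using mono_gen[OF inj sub sub st st se se] assms by (simp add: bfs_label_eq)
qed

lemma dfs_prefix: "i \<le> length ps \<Longrightarrow> lexdfs_label E s (ps @ qs) i v = lexdfs_label E s ps i v"
  by (induction i) (auto simp: nth_append)

lemma bfs_prefix: "i \<le> length ps \<Longrightarrow> lexbfs_label E s n (ps @ qs) i v = lexbfs_label E s n ps i v"
  by (induction i) (auto simp: nth_append)

fun gwalk :: "('a \<Rightarrow> 'a \<Rightarrow> bool) \<Rightarrow> 'a list \<Rightarrow> bool" where
  "gwalk E (x # y # zs) = (E x y \<and> gwalk E (y # zs))"
| "gwalk E _ = True"

lemma gwalk_Cons: "gwalk E (x # ys) = (gwalk E ys \<and> (ys \<noteq> [] \<longrightarrow> E x (hd ys)))"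
  by (cases ys) auto

lemma gwalk_append:
  "gwalk E (xs @ ys) \<longleftrightarrow> gwalk E xs \<and> gwalk E ys \<and> (xs \<noteq> [] \<longrightarrow> ys \<noteq> [] \<longrightarrow> E (last xs) (hd ys))"
  by (induction xs) (auto simp: gwalk_Cons)

lemma last_take_conv_nth: "i < length q \<Longrightarrow> last (take (Suc i) q) = q ! i"
  by (metis take_Suc_conv_app_nth last_snoc)

lemma gwalk_take: "gwalk E q \<Longrightarrow> gwalk E (take i q)"
  by (metis append_take_drop_id gwalk_append)

lemma gwalk_drop: "gwalk E q \<Longrightarrow> gwalk E (drop i q)"
  by (metis append_take_drop_id gwalk_append)

lemma gwalk_nth: "gwalk E q \<Longrightarrow> Suc i < length q \<Longrightarrow> E (q!i) (q!Suc i)"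
  by (induction E q arbitrary: i rule: gwalk.induct) (auto simp: nth_Cons split: nat.splits)

definition ipath :: "('a \<Rightarrow> 'a \<Rightarrow> bool) \<Rightarrow> 'a list \<Rightarrow> bool" where
  "ipath E q \<longleftrightarrow> distinct q \<and> gwalk E q \<and> (\<forall>i j. Suc i < j \<and> j < length q \<longrightarrow> \<not> E (q!i) (q!j))"

lemma ipath_exists:
  "gwalk E q \<Longrightarrow> q \<noteq> [] \<Longrightarrow> \<exists>q'. ipath E q' \<and> q' \<noteq> [] \<and> hd q' = hd q \<and> last q' = last q \<and> set q' \<subseteq> set q"
proof (induction "length q" arbitrary: q rule: less_induct)
  case less
  show ?case
  proof (cases "ipath E q")
    case True then show ?thesis using less.prems by blast
  next
    case False
    then consider (nd) "\<not> distinct q" | (ch) i j where "Suc i < j" "j < length q" "E (q!i) (q!j)"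
      using less.prems unfolding ipath_def by blast
    then show ?thesis
    proof cases
      case nd
      then obtain i j where ij: "i < j" "j < length q" "q!i = q!j"
        by (metis distinct_conv_nth linorder_neqE_nat)
      define q2 where "q2 = take i q @ drop j q"
      have w: "gwalk E q2"
      proof (cases "i = 0")
        case True then show ?thesis using less.prems by (simp add: q2_def gwalk_drop)
      next
        case False
        have "E (q!(i-1)) (q!i)" using gwalk_nth[OF less.prems(1), of "i-1"] False ij by simp
        moreover have "last (take i q) = q!(i-1)" using last_take_conv_nth[of "i-1" q] False ij by simp
        ultimately show ?thesis using less.prems ij False
          by (simp add: q2_def gwalk_append gwalk_take gwalk_drop last_take_conv_nth hd_drop_conv_nth)
      qed
      have ne: "q2 \<noteq> []" using ij by (simp add: q2_def)
      have hd: "hd q2 = hd q" using ij by (cases i) (use less.prems in \<open>auto simp: q2_def hd_drop_conv_nth hd_conv_nth nth_append\<close>)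
      have la: "last q2 = last q" using ij by (simp add: q2_def)
      have st: "set q2 \<subseteq> set q" by (auto simp: q2_def dest: in_set_takeD in_set_dropD)
      have "length q2 < length q" using ij by (simp add: q2_def)
      from less.hyps[OF this w ne] hd la st show ?thesis by auto
    next
      case ch
      define q2 where "q2 = take (Suc i) q @ drop j q"
      have w: "gwalk E q2"
        using less.prems ch
        by (simp add: q2_def gwalk_append gwalk_take gwalk_drop last_take_conv_nth hd_drop_conv_nth)
      have ne: "q2 \<noteq> []" using ch by (simp add: q2_def)
      have hd: "hd q2 = hd q" using ch less.prems by (simp add: q2_def)
      have la: "last q2 = last q" using ch by (simp add: q2_def)
      have st: "set q2 \<subseteq> set q" by (auto simp: q2_def dest: in_set_takeD in_set_dropD)
      have "length q2 < length q" using ch by (simp add: q2_def)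
      from less.hyps[OF this w ne] hd la st show ?thesis by auto
    qed
  qed
qed

locale gr =
  fixes V :: "'a set" and E :: "'a \<Rightarrow> 'a \<Rightarrow> bool"
  assumes graph: "graph V E"
begin

lemma finV: "finite V" using graph by (simp add: graph_def)
lemma EV: "E u v \<Longrightarrow> u \<in> V \<and> v \<in> V" using graph by (simp add: graph_def)
lemma Esym: "E u v \<Longrightarrow> E v u" using graph by (simp add: graph_def)
lemma Eirr: "\<not> E v v" using graph by (simp add: graph_def)
lemma conn: "u \<in> V \<Longrightarrow> v \<in> V \<Longrightarrow> E\<^sup>*\<^sup>* u v" using graph by (simp add: graph_def)

lemma lemmaK:
  assumes ch: "chordal V E" and ip: "ipath E q" and len: "2 \<le> length q" and b: "b \<notin> set q"
    and bh: "E b (hd q)" and bl: "E b (last q)"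
  shows "E b (q!1)"
proof (rule ccontr)
  assume nb: "\<not> E b (q!1)"
  let ?P = "\<lambda>j. 0 < j \<and> j < length q \<and> E b (q!j)"
  have "q \<noteq> []" using len by auto
  then have ex: "?P (length q - 1)" using len bl by (auto simp add: last_conv_nth)
  define j where "j = (LEAST j. ?P j)"
  have Pj: "?P j" unfolding j_def by (rule LeastI[where P="?P", OF ex])
  have nj: "\<And>t. 0 < t \<Longrightarrow> t < j \<Longrightarrow> \<not> E b (q!t)"
    using not_less_Least Pj unfolding j_def by (metis dual_order.strict_trans)
  have j2: "2 \<le> j" using Pj nb by (cases j; cases "j - 1") auto
  define cs where "cs = b # take (Suc j) q"
  have L: "length cs = j + 2" using Pj by (simp add: cs_def)
  have cs0: "cs ! 0 = b" by (simp add: cs_def)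
  have csS: "\<And>t. t \<le> j \<Longrightarrow> cs ! Suc t = q ! t" by (simp add: cs_def)
  have wq: "gwalk E q" and dq: "distinct q" and nc: "\<And>i j. Suc i < j \<Longrightarrow> j < length q \<Longrightarrow> \<not> E (q!i) (q!j)"
    using ip by (auto simp: ipath_def)
  have h0: "E b (q!0)" using bh len \<open>q \<noteq> []\<close> by (simp add: hd_conv_nth)
  have qV: "\<And>t. t < length q \<Longrightarrow> q!t \<in> V"
  proof -
    fix t assume t: "t < length q"
    show "q!t \<in> V"
    proof (cases "Suc t < length q")
      case True then show ?thesis using gwalk_nth[OF wq True] EV by blast
    next
      case False
      then have "t = length q - 1" using t by simp
      then have t1: "Suc (t - 1) = t" "Suc (t-1) < length q" using len t by auto
      then have "E (q!(t-1)) (q!Suc (t-1))" using gwalk_nth[OF wq] by blast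
      then show ?thesis using EV t1 by metis
    qed
  qed
  have ic: "induced_cycle V E cs"
    unfolding induced_cycle_def
  proof (intro conjI allI impI)
    show "distinct cs" using b dq by (auto simp: cs_def dest: in_set_takeD)
    show "set cs \<subseteq> V" using EV bh qV Pj
      by (auto simp: cs_def in_set_conv_nth)
    show "3 \<le> length cs" using L j2 by simp
  next
    fix i assume i: "i < length cs"
    show "E (cs ! i) (cs ! ((i + 1) mod length cs))"
    proof (cases i)
      case 0 then show ?thesis using L h0 cs0 csS[of 0] by simp
    next
      case (Suc t)
      show ?thesis
      proof (cases "t < j")
        case True
        then have "(i+1) mod length cs = Suc (Suc t)" using L Suc by simp
        then show ?thesis using Suc True csS[of t] csS[of "Suc t"] gwalk_nth[OF wq, of t] Pj by simp
      next
        case False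
        then have "t = j" using i L Suc by simp
        then have "(i+1) mod length cs = 0" using L Suc by simp
        then show ?thesis using Suc \<open>t = j\<close> csS[of j] cs0 Esym[of b "q!j"] Pj by simp
      qed
    qed
  next
    fix i c assume i: "i < length cs" and c: "c < length cs" and e: "E (cs ! i) (cs ! c)"
    show "c = (i + 1) mod length cs \<or> i = (c + 1) mod length cs"
    proof (cases i)
      case 0
      then show ?thesis
      proof (cases c)
        case 0 then show ?thesis using e \<open>i = 0\<close> Eirr by simp
      next
        case (Suc t)
        then have t: "t \<le> j" using c L by simp
        have "E b (q!t)" using e \<open>i=0\<close> Suc cs0 csS[OF t] by simp
        then have "t = 0 \<or> t = j" using nj t by (metis le_neq_implies_less not_gr0)
        then show ?thesis using \<open>i=0\<close> Suc L by auto
      qed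
    next
      case (Suc t)
      then have t: "t \<le> j" using i L by simp
      show ?thesis
      proof (cases c)
        case 0
        have "E (q!t) b" using e Suc 0 cs0 csS[OF t] by simp
        then have "E b (q!t)" by (rule Esym)
        then have "t = 0 \<or> t = j" using nj t by (metis le_neq_implies_less not_gr0)
        then show ?thesis using Suc 0 L by auto
      next
        case (Suc t')
        then have t': "t' \<le> j" using c L by simp
        have e2: "E (q!t) (q!t')" using e \<open>i = Suc t\<close> Suc csS[OF t] csS[OF t'] by simp
        have lt: "t < length q" "t' < length q" using t t' Pj by auto
        have "t \<noteq> t'" using e2 Eirr by auto
        moreover have "\<not> Suc t < t'" using nc[OF _ lt(2), of t] e2 by auto
        moreover have "\<not> Suc t' < t" using nc[OF _ lt(1), of t'] Esym[OF e2] by auto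
        ultimately have "t' = Suc t \<or> t = Suc t'" by linarith
        then show ?thesis using \<open>i = Suc t\<close> Suc i c L by auto
      qed
    qed
  qed
  have "length cs \<le> 3" using ch ic by (simp add: chordal_def)
  then show False using L j2 by simp
qed

end

lemma nth_notin_take: "distinct xs \<Longrightarrow> i < length xs \<Longrightarrow> xs!i \<notin> set (take i xs)"
  by (auto simp: in_set_conv_nth nth_eq_iff_index_eq)

lemma nth_in_take: "i < m \<Longrightarrow> i < length xs \<Longrightarrow> xs!i \<in> set (take m xs)"
  by (metis in_set_conv_nth length_take min_less_iff_conj nth_take)

lemma in_take_nth: "x \<in> set (take i xs) \<Longrightarrow> \<exists>j<i. j < length xs \<and> xs!j = x"
  by (auto simp: in_set_conv_nth)

lemma cross: "r\<^sup>*\<^sup>* a b \<Longrightarrow> a \<in> S \<Longrightarrow> b \<notin> S \<Longrightarrow> \<exists>x y. x \<in> S \<and> y \<notin> S \<and> r x y"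
  by (induction rule: rtranclp_induct) auto

lemma walk_of_rtranclp:
  "(\<lambda>x y. E x y \<and> Q x \<and> Q y)\<^sup>*\<^sup>* a b \<Longrightarrow>
   \<exists>ps. ps \<noteq> [] \<and> hd ps = a \<and> last ps = b \<and> gwalk E ps \<and> (\<forall>z\<in>set ps. z = a \<or> Q z)"
proof (induction rule: rtranclp_induct)
  case base then show ?case by (intro exI[of _ "[a]"]) auto
next
  case (step y z)
  then obtain ps where ps: "ps \<noteq> []" "hd ps = a" "last ps = y" "gwalk E ps" "\<forall>z\<in>set ps. z = a \<or> Q z"
    by blast
  show ?case using ps step.hyps(2)
    by (intro exI[of _ "ps @ [z]"]) (auto simp: gwalk_append)
qed

lemma rtranclp_sym: assumes "\<And>x y. r x y \<Longrightarrow> r y x" shows "r\<^sup>*\<^sup>* a b \<Longrightarrow> r\<^sup>*\<^sup>* b a"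
  by (induction rule: rtranclp_induct) (auto intro: converse_rtranclp_into_rtranclp assms)

context gr begin

definition revPEO :: "'a list \<Rightarrow> bool" where
  "revPEO \<sigma> \<longleftrightarrow> (\<forall>i j k. i < j \<longrightarrow> j < k \<longrightarrow> k < length \<sigma> \<longrightarrow> E (\<sigma>!i) (\<sigma>!k) \<longrightarrow> E (\<sigma>!j) (\<sigma>!k) \<longrightarrow> E (\<sigma>!i) (\<sigma>!j))"

definition gsearch :: "'a list \<Rightarrow> bool" where
  "gsearch \<sigma> \<longleftrightarrow> (\<forall>i. 0 < i \<longrightarrow> i < length \<sigma> \<longrightarrow> (\<exists>j<i. E (\<sigma>!i) (\<sigma>!j)))"

theorem thmA:
  fixes \<sigma> :: "'a list" and lab :: "nat \<Rightarrow> 'a \<Rightarrow> nat list" and s :: 'a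
  assumes ch: "chordal V E" and so: "search_order V lab \<sigma>" and s0: "\<sigma>!0 = s" and sV: "s \<in> V"
    and mono: "\<And>i u w. 0 < i \<Longrightarrow> i \<le> length \<sigma> \<Longrightarrow> u \<notin> set (take i \<sigma>) \<Longrightarrow> w \<notin> set (take i \<sigma>) \<Longrightarrow>
       u \<noteq> s \<Longrightarrow> w \<noteq> s \<Longrightarrow> Nb E \<sigma> i u \<subset> Nb E \<sigma> i w \<Longrightarrow> lab i u < lab i w"
  shows "gsearch \<sigma> \<and> revPEO \<sigma>"
proof -
  have dist: "distinct \<sigma>" and setV: "set \<sigma> = V"
    and sc: "\<And>i w. i < length \<sigma> \<Longrightarrow> w \<in> V - set (take i \<sigma>) \<Longrightarrow> \<not> lab i (\<sigma>!i) < lab i w"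
    using so by (auto simp: search_order_def lex_less_iff)
  have ne: "\<sigma> \<noteq> []" using setV sV by auto
  have sin: "\<And>k. 0 < k \<Longrightarrow> s \<in> set (take k \<sigma>)"
    using s0 ne by (cases \<sigma>; case_tac k) auto
  have nV: "\<And>i. i < length \<sigma> \<Longrightarrow> \<sigma>!i \<in> V" using setV by auto
  have gs: "gsearch \<sigma>"
    unfolding gsearch_def
  proof (intro allI impI)
    fix i assume i0: "0 < i" and il: "i < length \<sigma>"
    show "\<exists>j<i. E (\<sigma>!i) (\<sigma>!j)"
    proof (rule ccontr)
      assume nj: "\<not> (\<exists>j<i. E (\<sigma>!i) (\<sigma>!j))"
      have ni: "\<sigma>!i \<notin> set (take i \<sigma>)" using nth_notin_take[OF dist il] .
      obtain x y where xy: "x \<in> set (take i \<sigma>)" "y \<notin> set (take i \<sigma>)" "E x y"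
        using cross[OF conn[OF sV nV[OF il]] sin[OF i0] ni] by blast
      obtain j where j: "j < i" "\<sigma>!j = x" using in_take_nth[OF xy(1)] by blast
      have "Nb E \<sigma> i (\<sigma>!i) = {}" using nj Esym unfolding Nb_def by blast
      moreover have "j \<in> Nb E \<sigma> i y" using j xy by (simp add: Nb_def)
      ultimately have "Nb E \<sigma> i (\<sigma>!i) \<subset> Nb E \<sigma> i y" by blast
      moreover have "\<sigma>!i \<noteq> s" "y \<noteq> s" using sin[OF i0] ni xy(2) by auto
      ultimately have "lab i (\<sigma>!i) < lab i y" using mono[OF i0 _ ni xy(2)] il by simp
      moreover have "y \<in> V" using xy EV by blast
      ultimately show False using sc[OF il] xy(2) by blast
    qed
  qed
  define S where "S k = set (take k \<sigma>)" for k
  define out where "out k a b \<longleftrightarrow> E a b \<and> a \<notin> S k \<and> b \<notin> S k" for k a b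
  define Inv where "Inv k \<longleftrightarrow> (\<forall>x y u w. x \<in> S k \<longrightarrow> y \<in> S k \<longrightarrow> x \<noteq> y \<longrightarrow> u \<notin> S k \<longrightarrow> w \<notin> S k \<longrightarrow>
      E x u \<longrightarrow> E y w \<longrightarrow> (out k)\<^sup>*\<^sup>* u w \<longrightarrow> E x y)" for k
  have InvD: "\<And>k x y u w. Inv k \<Longrightarrow> x \<in> S k \<Longrightarrow> y \<in> S k \<Longrightarrow> x \<noteq> y \<Longrightarrow> u \<notin> S k \<Longrightarrow> w \<notin> S k \<Longrightarrow>
      E x u \<Longrightarrow> E y w \<Longrightarrow> (out k)\<^sup>*\<^sup>* u w \<Longrightarrow> E x y"
    unfolding Inv_def by blast
  have SSuc: "\<And>k. k < length \<sigma> \<Longrightarrow> S (Suc k) = insert (\<sigma>!k) (S k)"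
    by (simp add: S_def take_Suc_conv_app_nth)
  have outmono: "\<And>k a b. k < length \<sigma> \<Longrightarrow> (out (Suc k))\<^sup>*\<^sup>* a b \<Longrightarrow> (out k)\<^sup>*\<^sup>* a b"
  proof -
    fix k a b assume k: "k < length \<sigma>" and r: "(out (Suc k))\<^sup>*\<^sup>* a b"
    have "out (Suc k) \<le> out k" using SSuc[OF k] by (auto simp: out_def)
    then have "(out (Suc k))\<^sup>*\<^sup>* \<le> (out k)\<^sup>*\<^sup>*" by (rule rtranclp_mono)
    then show "(out k)\<^sup>*\<^sup>* a b" using r by (simp add: le_fun_def)
  qed
  have outsym: "\<And>k a b. (out k)\<^sup>*\<^sup>* a b \<Longrightarrow> (out k)\<^sup>*\<^sup>* b a"
    by (rule rtranclp_sym) (unfold out_def, use Esym in blast)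
  have core: "E (\<sigma>!k) y"
    if k: "k < length \<sigma>" and I: "Inv k" and y: "y \<in> S k" and u: "u \<notin> S (Suc k)" and w: "w \<notin> S (Suc k)"
      and vu: "E (\<sigma>!k) u" and yw: "E y w" and uw: "(out (Suc k))\<^sup>*\<^sup>* u w" for k y u w
  proof (rule ccontr)
    define v where "v = \<sigma>!k"
    assume "\<not> E (\<sigma>!k) y"
    then have nvy1: "\<not> E v y" by (simp add: v_def)
    then have nvy: "\<not> E v y" "\<not> E y v" using Esym by blast+
    have k0: "0 < k" using y by (cases k) (auto simp: S_def)
    have vS: "v \<notin> S k" using nth_notin_take[OF dist k] by (simp add: S_def v_def)
    have vS1: "v \<in> S (Suc k)" using SSuc[OF k] by (simp add: v_def)
    have sub: "S k \<subseteq> S (Suc k)" using SSuc[OF k] by auto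
    have "(out (Suc k))\<^sup>*\<^sup>* w u" using outsym[OF uw] .
    then have "(\<lambda>x y. E x y \<and> x \<notin> S (Suc k) \<and> y \<notin> S (Suc k))\<^sup>*\<^sup>* w u"
      by (simp add: out_def[abs_def])
    from walk_of_rtranclp[OF this] obtain ps where ps: "ps \<noteq> []" "hd ps = w" "last ps = u" "gwalk E ps"
      "\<forall>z\<in>set ps. z = w \<or> z \<notin> S (Suc k)" by blast
    have psS: "\<forall>z\<in>set ps. z \<notin> S (Suc k)" using ps(5) w by auto
    define q0 where "q0 = [y] @ ps @ [v]"
    have wq0: "gwalk E q0" unfolding q0_def
      using ps yw Esym[OF vu] by (auto simp: gwalk_Cons gwalk_append v_def)
    obtain q where q: "ipath E q" "q \<noteq> []" "hd q = y" "last q = v" "set q \<subseteq> set q0"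
      using ipath_exists[OF wq0] by (auto simp: q0_def)
    have dq: "distinct q" and wq: "gwalk E q" using q(1) by (auto simp: ipath_def)
    have l3: "3 \<le> length q"
    proof (rule ccontr)
      assume "\<not> 3 \<le> length q"
      then consider "length q = 1" | "length q = 2" using q(2) by (cases "length q") (auto, linarith)
      then show False
      proof cases
        case 1 then have "hd q = last q" by (cases q) auto
        then show False using q vS y by auto
      next
        case 2
        have "E (q!0) (q!Suc 0)" using gwalk_nth[OF wq, of 0] 2 by simp
        moreover have "q!0 = y" using q(2,3) by (simp add: hd_conv_nth)
        moreover have "q!Suc 0 = v" using q(2,4) 2 by (simp add: last_conv_nth)
        ultimately show False using nvy by simp
      qed
    qed
    define c where "c = q!1"
    have q0y: "q!0 = y" using q(2,3) by (simp add: hd_conv_nth)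
    have yc: "E y c" using gwalk_nth[OF wq, of 0] l3 q0y by (simp add: c_def)
    have cinq: "c \<in> set q" using l3 by (simp add: c_def)
    have cv: "c \<noteq> v"
    proof
      assume "c = v"
      then have "q!1 = q!(length q - 1)" using q(2,4) by (simp add: c_def last_conv_nth)
      then show False using dq l3 by (simp add: nth_eq_iff_index_eq)
    qed
    have cy: "c \<noteq> y" using yc Eirr by auto
    have cps: "c \<in> set ps" using cinq q(5) cv cy by (auto simp: q0_def)
    have cS: "c \<notin> S k" using psS cps sub by auto
    have cV: "c \<in> V" using yc EV by blast
    have subN: "Nb E \<sigma> k v \<subseteq> Nb E \<sigma> k c"
    proof
      fix j assume "j \<in> Nb E \<sigma> k v"
      then have j: "j < k" "E (\<sigma>!j) v" by (auto simp: Nb_def)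
      define b where "b = \<sigma>!j"
      have bS: "b \<in> S k" using j k by (auto simp: S_def b_def in_set_conv_nth)
      have "(out k)\<^sup>*\<^sup>* v w"
      proof -
        have "out k v u" using vu u sub vS by (auto simp: out_def v_def)
        then show ?thesis using outmono[OF k uw] by (meson converse_rtranclp_into_rtranclp)
      qed
      moreover have "b \<noteq> y" using j(2) nvy by (auto simp: b_def v_def)
      moreover have "w \<notin> S k" using w sub by blast
      ultimately have eby: "E b y"
        using InvD[OF I bS y _ vS _ _ yw] j(2) by (simp add: b_def v_def)
      have bq: "b \<notin> set q"
      proof
        assume "b \<in> set q"
        then have "b \<in> set q0" using q(5) by blast
        then show False using bS using psS sub nvy vS y j(2) Eirr by (auto simp: q0_def v_def b_def)
      qed
      have "E b (q!1)"
        using lemmaK[OF ch q(1) _ bq] l3 q(3,4) j(2) eby by (simp add: b_def v_def)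
      then show "j \<in> Nb E \<sigma> k c" using j by (simp add: Nb_def b_def c_def)
    qed
    have "y \<in> set (take k \<sigma>)" using y by (simp add: S_def)
    from in_take_nth[OF this] obtain jy where jy: "jy < k" "\<sigma>!jy = y" by blast
    have "jy \<in> Nb E \<sigma> k c" "jy \<notin> Nb E \<sigma> k v" using jy yc nvy by (auto simp: Nb_def)
    then have "Nb E \<sigma> k v \<subset> Nb E \<sigma> k c" using subN by blast
    moreover have "v \<noteq> s" "c \<noteq> s" using sin[OF k0] vS cS by (auto simp: S_def)
    ultimately have "lab k v < lab k c" using mono[OF k0 _ _ _] k vS cS by (simp add: S_def)
    then show False using sc[OF k] cV cS by (simp add: S_def v_def)
  qed
  have inv: "Inv k" if "k \<le> length \<sigma>" for k
    using that
  proof (induction k)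
    case 0 then show ?case by (simp add: Inv_def S_def)
  next
    case (Suc k)
    then have k: "k < length \<sigma>" by simp
    have I: "Inv k" using Suc by simp
    show ?case unfolding Inv_def
    proof (intro allI impI)
      fix x y u w
      assume x: "x \<in> S (Suc k)" and y: "y \<in> S (Suc k)" and xy: "x \<noteq> y" and u: "u \<notin> S (Suc k)"
        and w: "w \<notin> S (Suc k)" and xu: "E x u" and yw: "E y w" and uw: "(out (Suc k))\<^sup>*\<^sup>* u w"
      have sub: "S k \<subseteq> S (Suc k)" using SSuc[OF k] by auto
      consider "x \<in> S k" "y \<in> S k" | "x = \<sigma>!k" "y \<in> S k" | "y = \<sigma>!k" "x \<in> S k"
        using x y xy SSuc[OF k] by auto
      then show "E x y"
      proof cases
        case 1
        have "u \<notin> S k" "w \<notin> S k" using u w sub by blast+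
        then show ?thesis using InvD[OF I 1 xy _ _ xu yw outmono[OF k uw]] by blast
      next
        case 2 then show ?thesis using core[OF k I _ u w _ yw uw] xu by simp
      next
        case 3
        have "E (\<sigma>!k) x" using core[OF k I 3(2) w u _ xu outsym[OF uw]] yw 3(1) by simp
        then have "E x (\<sigma>!k)" by (rule Esym)
        then show ?thesis using 3(1) by simp
      qed
    qed
  qed
  have "revPEO \<sigma>"
    unfolding revPEO_def
  proof (intro allI impI)
    fix i j k assume ij: "i < j" and jk: "j < k" and kl: "k < length \<sigma>"
      and ik: "E (\<sigma>!i) (\<sigma>!k)" and jk': "E (\<sigma>!j) (\<sigma>!k)"
    have I: "Inv (Suc j)" using inv jk kl by simp
    have "\<sigma>!i \<in> S (Suc j)" "\<sigma>!j \<in> S (Suc j)" using ij jk kl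
      by (simp_all add: S_def nth_in_take)
    moreover have "\<sigma>!i \<noteq> \<sigma>!j" using dist ij jk kl by (simp add: nth_eq_iff_index_eq)
    moreover have "\<sigma>!k \<notin> S (Suc j)"
    proof -
      have "set (take (Suc j) \<sigma>) \<subseteq> set (take k \<sigma>)" using jk by (intro set_take_subset_set_take) simp
      then show ?thesis using nth_notin_take[OF dist kl] by (auto simp: S_def)
    qed
    ultimately show "E (\<sigma>!i) (\<sigma>!j)" using InvD[OF I _ _ _ _ _ ik jk'] by blast
  qed
  with gs show ?thesis by simp
qed

end

locale ordl = gr V E for V :: "'a set" and E +
  fixes \<sigma> :: "'a list" and s :: 'a
  assumes dist: "distinct \<sigma>" and setV: "set \<sigma> = V" and s0: "\<sigma>!0 = s" and sV: "s \<in> V"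
    and gs: "gsearch \<sigma>" and peo: "revPEO \<sigma>"
begin

definition pos :: "'a \<Rightarrow> nat" where "pos w = (THE i. i < length \<sigma> \<and> \<sigma>!i = w)"

lemma pos_nth: "i < length \<sigma> \<Longrightarrow> pos (\<sigma>!i) = i"
  unfolding pos_def using dist by (auto simp: nth_eq_iff_index_eq)

lemma pos: "w \<in> V \<Longrightarrow> pos w < length \<sigma> \<and> \<sigma>!(pos w) = w"
proof -
  assume "w \<in> V"
  then obtain i where "i < length \<sigma>" "\<sigma>!i = w" using setV by (auto simp: in_set_conv_nth)
  then show ?thesis using pos_nth by auto
qed

lemma pos_inj: "u \<in> V \<Longrightarrow> w \<in> V \<Longrightarrow> pos u = pos w \<Longrightarrow> u = w"
  using pos by metis

lemma pos_s: "pos s = 0"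
  using pos_nth[of 0] s0 sV setV by (metis length_pos_if_in_set)

definition gi :: "nat \<Rightarrow> nat" where "gi i = (GREATEST j. j < i \<and> E (\<sigma>!i) (\<sigma>!j))"

definition P :: "'a \<Rightarrow> 'a" where "P w = \<sigma> ! gi (pos w)"

lemma gi: "0 < i \<Longrightarrow> i < length \<sigma> \<Longrightarrow> gi i < i \<and> E (\<sigma>!i) (\<sigma>!gi i)"
proof -
  assume i: "0 < i" "i < length \<sigma>"
  then obtain j where "j < i" "E (\<sigma>!i) (\<sigma>!j)" using gs by (auto simp: gsearch_def)
  then show ?thesis unfolding gi_def
    using GreatestI_nat[of "\<lambda>j. j < i \<and> E (\<sigma>!i) (\<sigma>!j)" j i] by auto
qed

lemma gi_ge: "j < i \<Longrightarrow> E (\<sigma>!i) (\<sigma>!j) \<Longrightarrow> j \<le> gi i"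
  unfolding gi_def using Greatest_le_nat[of "\<lambda>j. j < i \<and> E (\<sigma>!i) (\<sigma>!j)" j i] by auto

lemma F1: "w \<in> V \<Longrightarrow> w \<noteq> s \<Longrightarrow> P w \<in> V \<and> E w (P w) \<and> pos (P w) < pos w"
proof -
  assume w: "w \<in> V" "w \<noteq> s"
  have p: "pos w < length \<sigma>" "\<sigma>!pos w = w" using pos[OF w(1)] by auto
  have "pos w \<noteq> 0"
  proof
    assume "pos w = 0" then show False using p w s0 by simp
  qed
  then have g: "gi (pos w) < pos w" "E w (\<sigma>!gi (pos w))" using gi[of "pos w"] p by auto
  have "gi (pos w) < length \<sigma>" using g p by simp
  then show ?thesis using g pos_nth setV unfolding P_def by (auto intro: nth_mem)
qed

lemma F2: "u \<in> V \<Longrightarrow> w \<in> V \<Longrightarrow> E w u \<Longrightarrow> pos u < pos w \<Longrightarrow> pos u \<le> pos (P w)"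
proof -
  assume a: "u \<in> V" "w \<in> V" "E w u" "pos u < pos w"
  have "E (\<sigma>!pos w) (\<sigma>!pos u)" using a pos by simp
  then have "pos u \<le> gi (pos w)" using gi_ge a(4) by blast
  moreover have "gi (pos w) < length \<sigma>"
  proof -
    have "gi (pos w) < pos w" using gi[of "pos w"] a(4) pos[OF a(2)] by simp
    then show ?thesis using pos[OF a(2)] by simp
  qed
  ultimately show ?thesis unfolding P_def using pos_nth by simp
qed

lemma F3: "x \<in> V \<Longrightarrow> y \<in> V \<Longrightarrow> w \<in> V \<Longrightarrow> E x w \<Longrightarrow> E y w \<Longrightarrow> pos x < pos w \<Longrightarrow> pos y < pos w \<Longrightarrow> x \<noteq> y \<Longrightarrow> E x y"
proof -
  assume a: "x \<in> V" "y \<in> V" "w \<in> V" "E x w" "E y w" "pos x < pos w" "pos y < pos w" "x \<noteq> y"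
  have pxy: "pos x \<noteq> pos y" using a pos_inj by blast
  have px: "\<sigma>!pos x = x" and py: "\<sigma>!pos y = y" and pw: "\<sigma>!pos w = w" "pos w < length \<sigma>"
    using pos a by auto
  show ?thesis
  proof (cases "pos x < pos y")
    case True
    then show ?thesis using peo a pw unfolding revPEO_def by (metis px py)
  next
    case False
    then have "pos y < pos x" using pxy by simp
    then have "E y x" using peo a pw unfolding revPEO_def by (metis px py)
    then show ?thesis by (rule Esym)
  qed
qed

definition R :: "'a \<Rightarrow> 'a \<Rightarrow> bool" where "R a b \<longleftrightarrow> b \<in> V \<and> b \<noteq> s \<and> a = P b"

lemma R_pos: "R a b \<Longrightarrow> pos a < pos b \<and> a \<in> V"
  unfolding R_def using F1 by auto

lemma Rt_pos: "R\<^sup>+\<^sup>+ a b \<Longrightarrow> pos a < pos b \<and> a \<in> V"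
  by (induction rule: tranclp_induct) (auto dest: R_pos)

lemma Rs_pos: "R\<^sup>*\<^sup>* a b \<Longrightarrow> b \<in> V \<Longrightarrow> pos a \<le> pos b \<and> a \<in> V"
  by (metis Rt_pos order.order_iff_strict rtranclpD)

lemma A1: "w \<in> V \<Longrightarrow> E u w \<Longrightarrow> pos u < pos w \<Longrightarrow> R\<^sup>+\<^sup>+ u w"
proof (induction "pos w" arbitrary: w u rule: less_induct)
  case less
  have uV: "u \<in> V" using less.prems EV by blast
  have ws: "w \<noteq> s" using less.prems pos_s by auto
  have f1: "P w \<in> V" "E w (P w)" "pos (P w) < pos w" using F1[OF less.prems(1) ws] by auto
  have Rw: "R (P w) w" using less.prems ws by (simp add: R_def)
  have le: "pos u \<le> pos (P w)" using F2[OF uV less.prems(1) Esym[OF less.prems(2)] less.prems(3)] .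
  show ?case
  proof (cases "u = P w")
    case True then show ?thesis using Rw by auto
  next
    case False
    then have lt: "pos u < pos (P w)" using le pos_inj[OF uV f1(1)] by fastforce
    have "E u (P w)" using F3[OF uV f1(1) less.prems(1) less.prems(2) Esym[OF f1(2)] less.prems(3) f1(3) False] .
    then have "R\<^sup>+\<^sup>+ u (P w)" using less.hyps[OF f1(3) f1(1) _ lt] by blast
    then show ?thesis using Rw by (rule tranclp.trancl_into_trancl)
  qed
qed

lemma chain: "R\<^sup>*\<^sup>* x w \<Longrightarrow> R\<^sup>*\<^sup>* a w \<Longrightarrow> R\<^sup>*\<^sup>* x a \<or> R\<^sup>*\<^sup>* a x"
proof (induction arbitrary: a rule: rtranclp_induct)
  case base then show ?case by simp
next
  case (step y z)
  have "a = z \<or> (\<exists>y'. R\<^sup>*\<^sup>* a y' \<and> R y' z)" using step.prems by (blast elim: rtranclp.cases)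
  then show ?case
  proof
    assume "a = z" then show ?thesis using step.hyps(1,2) by (meson rtranclp.rtrancl_into_rtrancl)
  next
    assume "\<exists>y'. R\<^sup>*\<^sup>* a y' \<and> R y' z"
    then obtain y' where y': "R\<^sup>*\<^sup>* a y'" "R y' z" by blast
    then have "y' = y" using step.hyps(2) by (simp add: R_def)
    then show ?thesis using step.IH y' by blast
  qed
qed

lemma A3: "R\<^sup>*\<^sup>* a w \<Longrightarrow> R\<^sup>+\<^sup>+ x a \<Longrightarrow> E x w \<Longrightarrow> E x a"
proof (induction rule: rtranclp_induct)
  case base then show ?case by simp
next
  case (step y w)
  have wV: "w \<in> V" and ws: "w \<noteq> s" and yP: "y = P w" using step.hyps(2) by (auto simp: R_def)
  have xy: "R\<^sup>+\<^sup>+ x y" using step.prems(1) step.hyps(1) by (rule tranclp_rtranclp_tranclp)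
  have px: "pos x < pos y" "x \<in> V" using Rt_pos[OF xy] by auto
  have f1: "P w \<in> V" "E w (P w)" "pos (P w) < pos w" using F1[OF wV ws] by auto
  have "pos x < pos w" "x \<noteq> P w" using px f1(3) yP by auto
  then have "E x y" using F3[OF px(2) f1(1) wV step.prems(2) Esym[OF f1(2)] _ f1(3)] yP by simp
  then show ?case using step.IH step.prems(1) by blast
qed

end

lemma L_tree_alt:
  assumes "distinct \<rho>" "set \<rho> = V" "\<rho>!0 = s" "\<rho> \<noteq> []"
    and "\<And>i. 0 < i \<Longrightarrow> i < length \<rho> \<Longrightarrow> \<rho> ! (GREATEST j. j < i \<and> E (\<rho>!i) (\<rho>!j)) = f (\<rho>!i)"
  shows "L_tree E \<rho> = {{w, f w} | w. w \<in> V \<and> w \<noteq> s}"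
proof -
  have "L_tree E \<rho> = {{\<rho>!i, f (\<rho>!i)} | i. 0 < i \<and> i < length \<rho>}"
    unfolding L_tree_def
  proof (intro set_eqI iffI)
    fix e assume "e \<in> {{\<rho>!i, \<rho>!(GREATEST j. j < i \<and> E (\<rho>!i) (\<rho>!j))} | i. 0 < i \<and> i < length \<rho>}"
    then obtain i where i: "e = {\<rho>!i, \<rho>!(GREATEST j. j < i \<and> E (\<rho>!i) (\<rho>!j))}" "0 < i" "i < length \<rho>"
      by blast
    then have "e = {\<rho>!i, f (\<rho>!i)}" using assms(5) by simp
    then show "e \<in> {{\<rho>!i, f (\<rho>!i)} | i. 0 < i \<and> i < length \<rho>}" using i by blast
  next
    fix e assume "e \<in> {{\<rho>!i, f (\<rho>!i)} | i. 0 < i \<and> i < length \<rho>}"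
    then obtain i where i: "e = {\<rho>!i, f (\<rho>!i)}" "0 < i" "i < length \<rho>"
      by blast
    then have "e = {\<rho>!i, \<rho>!(GREATEST j. j < i \<and> E (\<rho>!i) (\<rho>!j))}" using assms(5) by simp
    then show "e \<in> {{\<rho>!i, \<rho>!(GREATEST j. j < i \<and> E (\<rho>!i) (\<rho>!j))} | i. 0 < i \<and> i < length \<rho>}"
      using i by blast
  qed
  also have "\<dots> = {{w, f w} | w. w \<in> V \<and> w \<noteq> s}"
  proof (intro set_eqI iffI)
    fix e assume "e \<in> {{\<rho>!i, f (\<rho>!i)} | i. 0 < i \<and> i < length \<rho>}"
    then obtain i where i: "e = {\<rho>!i, f (\<rho>!i)}" "0 < i" "i < length \<rho>" by blast
    have "\<rho>!i \<noteq> s"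
    proof
      assume "\<rho>!i = s"
      then have "\<rho>!i = \<rho>!0" using assms(3) by simp
      moreover have "0 < length \<rho>" using i(3) by linarith
      ultimately show False using nth_eq_iff_index_eq[OF assms(1) i(3) \<open>0 < length \<rho>\<close>] i(2) by simp
    qed
    then show "e \<in> {{w, f w} | w. w \<in> V \<and> w \<noteq> s}" using i assms(2) by (auto intro: nth_mem)
  next
    fix e assume "e \<in> {{w, f w} | w. w \<in> V \<and> w \<noteq> s}"
    then obtain w where w: "e = {w, f w}" "w \<in> V" "w \<noteq> s" by blast
    then obtain i where i: "i < length \<rho>" "\<rho>!i = w" using assms(2) by (auto simp: in_set_conv_nth)
    have "i \<noteq> 0"
    proof
      assume "i = 0" then show False using i w assms(3) by simp
    qed
    then show "e \<in> {{\<rho>!i, f (\<rho>!i)} | i. 0 < i \<and> i < length \<rho>}" using i w by blast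
  qed
  finally show ?thesis .
qed

context ordl begin

definition before :: "'a list \<Rightarrow> 'a \<Rightarrow> 'a \<Rightarrow> bool" where
  "before ps a b \<longleftrightarrow> (\<exists>i j. i < j \<and> j < length ps \<and> ps!i = a \<and> ps!j = b)"

definition pclosed :: "'a list \<Rightarrow> bool" where
  "pclosed ps \<longleftrightarrow> (\<forall>i<length ps. ps!i \<noteq> s \<longrightarrow> P (ps!i) \<in> set (take i ps))"

lemma closure: "R\<^sup>*\<^sup>* a w \<Longrightarrow> pclosed ps \<Longrightarrow> w \<in> set ps \<Longrightarrow> a \<in> set ps"
proof (induction rule: converse_rtranclp_induct)
  case base then show ?case by blast
next
  case (step a y)
  then have "y \<in> set ps" by blast
  then obtain i where i: "i < length ps" "ps!i = y" by (auto simp: in_set_conv_nth)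
  have "y \<noteq> s" "a = P y" using step.hyps(1) by (auto simp: R_def)
  then show ?case using step.prems(1) i unfolding pclosed_def by (metis in_set_takeD)
qed

lemma before_R: "pclosed ps \<Longrightarrow> R a b \<Longrightarrow> b \<in> set ps \<Longrightarrow> before ps a b"
proof -
  assume pc: "pclosed ps" and r: "R a b" and b: "b \<in> set ps"
  obtain j where j: "j < length ps" "ps!j = b" using b by (auto simp: in_set_conv_nth)
  have bs: "b \<noteq> s" and ab: "a = P b" using r by (auto simp: R_def)
  have "ps!j \<noteq> s" using j(2) bs by simp
  then have "P (ps!j) \<in> set (take j ps)" using pc j(1) unfolding pclosed_def by blast
  then have "a \<in> set (take j ps)" using j(2) ab by simp
  from in_take_nth[OF this] obtain i where i: "i < j" "ps!i = a" by blast
  have "i < j \<and> j < length ps \<and> ps!i = a \<and> ps!j = b" using i j by simp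
  then show ?thesis unfolding before_def by blast
qed

lemma before_trans: "distinct ps \<Longrightarrow> before ps a b \<Longrightarrow> before ps b c \<Longrightarrow> before ps a c"
proof -
  assume d: "distinct ps" and ab: "before ps a b" and bc: "before ps b c"
  obtain i j where ij: "i < j" "j < length ps" "ps!i = a" "ps!j = b" using ab unfolding before_def by blast
  obtain i' j' where ij': "i' < j'" "j' < length ps" "ps!i' = b" "ps!j' = c" using bc unfolding before_def by blast
  have "i' < length ps" using ij' by simp
  then have "j = i'" using nth_eq_iff_index_eq[OF d ij(2) \<open>i' < length ps\<close>] ij(4) ij'(3) by simp
  then show ?thesis unfolding before_def using ij ij' by (intro exI[of _ i] exI[of _ j']) simp
qed

lemma before_Rt: "R\<^sup>+\<^sup>+ a b \<Longrightarrow> pclosed ps \<Longrightarrow> distinct ps \<Longrightarrow> b \<in> set ps \<Longrightarrow> before ps a b"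
proof (induction rule: tranclp_induct)
  case (base y) then show ?case using before_R[OF base.prems(1) base.hyps base.prems(3)] by blast
next
  case (step y z)
  have "R\<^sup>*\<^sup>* y z" using step.hyps(2) by blast
  then have "y \<in> set ps" using closure step.prems by blast
  then have "before ps a y" using step.IH step.prems by blast
  moreover have "before ps y z" using before_R[OF step.prems(1) step.hyps(2) step.prems(3)] .
  ultimately show ?case using before_trans step.prems(2) by blast
qed

theorem thmB:
  fixes labf :: "'a list \<Rightarrow> nat \<Rightarrow> 'a \<Rightarrow> nat list"
  assumes mono: "\<And>ps i u w. distinct ps \<Longrightarrow> set ps \<subseteq> V \<Longrightarrow> 0 < i \<Longrightarrow> i \<le> length ps \<Longrightarrow> ps!0 = s \<Longrightarrow>
      u \<notin> set (take i ps) \<Longrightarrow> w \<notin> set (take i ps) \<Longrightarrow> Nb E ps i u \<subseteq> Nb E ps i w \<Longrightarrow> labf ps i u \<le> labf ps i w"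
    and pre: "\<And>ps qs i v. i \<le> length ps \<Longrightarrow> labf (ps @ qs) i v = labf ps i v"
    and init: "\<And>ps v. v \<noteq> s \<Longrightarrow> labf ps 0 v < labf ps 0 s"
  shows "\<exists>\<tau>. search_order V (labf \<tau>) \<tau> \<and> \<tau>!0 = s \<and> L_tree E \<tau> = L_tree E \<sigma>"
proof -
  define n where "n = length \<sigma>"
  have nV: "n = card V" using dist setV by (simp add: n_def distinct_card[symmetric])
  define Good where "Good k ps \<longleftrightarrow> length ps = k \<and> distinct ps \<and> set ps \<subseteq> V \<and> (0 < k \<longrightarrow> ps!0 = s) \<and>
      pclosed ps \<and> (\<forall>i<k. \<forall>w \<in> V - set (take i ps). \<not> labf ps i (ps!i) < labf ps i w)" for k ps
  have ex: "\<exists>ps. Good k ps" if "k \<le> n" for k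
    using that
  proof (induction k)
    case 0 then show ?case by (intro exI[of _ "[]"]) (simp add: Good_def pclosed_def)
  next
    case (Suc k)
    then obtain ps where G: "Good k ps" by auto
    have len: "length ps = k" and dps: "distinct ps" and psV: "set ps \<subseteq> V"
      and ps0: "0 < k \<Longrightarrow> ps!0 = s" and pc: "pclosed ps"
      and sc: "\<And>i w. i < k \<Longrightarrow> w \<in> V - set (take i ps) \<Longrightarrow> \<not> labf ps i (ps!i) < labf ps i w"
      using G unfolding Good_def by auto
    show ?case
    proof (cases "k = 0")
      case True
      then have "ps = []" using len by simp
      have "Good (Suc k) [s]" unfolding Good_def pclosed_def
      proof (intro conjI allI impI ballI)
        fix i w assume "i < Suc k" and w: "w \<in> V - set (take i [s])"
        then have "i = 0" using True by simp
        show "\<not> labf [s] i ([s]!i) < labf [s] i w"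
          using init[of w "[s]"] \<open>i = 0\<close> by (cases "w = s") auto
      qed (use True sV in auto)
      then show ?thesis by blast
    next
      case False
      then have k0: "0 < k" by simp
      have sps: "s \<in> set ps" using ps0[OF k0] len k0 by (metis nth_mem)
      define U where "U = V - set ps"
      have finU: "finite U" using finV by (simp add: U_def)
      have "card (set ps) = k" using dps len by (simp add: distinct_card)
      moreover have "k < card V" using Suc.prems nV by simp
      ultimately have "U \<noteq> {}" using psV unfolding U_def by auto
      define m where "m = Max (labf ps k ` U)"
      have fim: "finite (labf ps k ` U)" using finU by simp
      have "m \<in> labf ps k ` U" unfolding m_def by (rule Max_in[OF fim]) (use \<open>U \<noteq> {}\<close> in simp)
      then obtain w0 where w0U: "w0 \<in> U" and w0m: "labf ps k w0 = m" by blast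
      have "\<And>w. w \<in> U \<Longrightarrow> labf ps k w \<le> labf ps k w0"
        unfolding w0m m_def by (rule Max_ge[OF fim]) simp
      note w0 = w0U this
      define A where "A = {a \<in> U. R\<^sup>*\<^sup>* a w0}"
      have "w0 \<in> A" using w0 by (simp add: A_def)
      then obtain a where aA: "a \<in> A" and amin: "\<And>y. y \<in> A \<Longrightarrow> pos a \<le> pos y"
        using ex_has_least_nat[of "\<lambda>a. a \<in> A" w0 pos] by blast
      have aU: "a \<in> U" and aw0: "R\<^sup>*\<^sup>* a w0" using aA by (auto simp: A_def)
      have aV: "a \<in> V" and anps: "a \<notin> set ps" using aU by (auto simp: U_def)
      have as: "a \<noteq> s" using sps anps by auto
      have f1: "P a \<in> V" "E a (P a)" "pos (P a) < pos a" using F1[OF aV as] by auto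
      have Pa: "P a \<in> set ps"
      proof (rule ccontr)
        assume "P a \<notin> set ps"
        then have "P a \<in> U" using f1 by (simp add: U_def)
        moreover have "R\<^sup>*\<^sup>* (P a) w0" using aw0 aV as by (auto simp: R_def intro: converse_rtranclp_into_rtranclp)
        ultimately have "P a \<in> A" by (simp add: A_def)
        then show False using amin f1(3) by fastforce
      qed
      have w0V: "w0 \<in> V" and w0nps: "w0 \<notin> set ps" using w0 by (auto simp: U_def)
      have subN: "Nb E ps k w0 \<subseteq> Nb E ps k a"
      proof
        fix j assume "j \<in> Nb E ps k w0"
        then have j: "j < k" "E (ps!j) w0" by (auto simp: Nb_def)
        define x where "x = ps!j"
        have xps: "x \<in> set ps" using j len by (simp add: x_def)
        have xV: "x \<in> V" using xps psV by blast
        have xw: "x \<noteq> w0" using xps w0nps by auto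
        have "pos x \<noteq> pos w0" using pos_inj[OF xV w0V] xw by blast
        moreover have "\<not> pos w0 < pos x"
        proof
          assume "pos w0 < pos x"
          then have "R\<^sup>+\<^sup>+ w0 x" using A1[OF xV Esym[OF j(2)[folded x_def]]] by blast
          then have "w0 \<in> set ps" using closure[OF _ pc xps] by (blast dest: tranclp_into_rtranclp)
          then show False using w0nps by blast
        qed
        ultimately have "pos x < pos w0" by simp
        then have "R\<^sup>+\<^sup>+ x w0" using A1[OF w0V j(2)[folded x_def]] by blast
        then have "R\<^sup>*\<^sup>* x w0" by (rule tranclp_into_rtranclp)
        from chain[OF this aw0] have "R\<^sup>*\<^sup>* x a \<or> R\<^sup>*\<^sup>* a x" .
        moreover have "\<not> R\<^sup>*\<^sup>* a x" using closure[OF _ pc xps] anps by blast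
        ultimately have "R\<^sup>*\<^sup>* x a" by blast
        moreover have "x \<noteq> a" using xps anps by blast
        ultimately have "R\<^sup>+\<^sup>+ x a" using rtranclpD by metis
        then have "E x a" using A3[OF aw0 _ j(2)[folded x_def]] by blast
        then show "j \<in> Nb E ps k a" using j by (simp add: Nb_def x_def)
      qed
      have "take k ps = ps" using len by simp
      then have "labf ps k w0 \<le> labf ps k a"
        using mono[OF dps psV k0 _ ps0[OF k0] _ _ subN] len w0nps anps by simp
      then have amax: "\<And>w. w \<in> U \<Longrightarrow> labf ps k w \<le> labf ps k a" using w0(2) order.trans by blast
      define ps' where "ps' = ps @ [a]"
      have Good': "Good (Suc k) ps'" unfolding Good_def
      proof (intro conjI)
        show "length ps' = Suc k" using len by (simp add: ps'_def)
        show "distinct ps'" using dps anps by (simp add: ps'_def)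
        show "set ps' \<subseteq> V" using psV aV by (simp add: ps'_def)
        show "0 < Suc k \<longrightarrow> ps'!0 = s" using ps0[OF k0] k0 len by (simp add: ps'_def nth_append)
        show "pclosed ps'" unfolding pclosed_def
        proof (intro allI impI)
          fix i assume i: "i < length ps'" and ns: "ps'!i \<noteq> s"
          show "P (ps'!i) \<in> set (take i ps')"
          proof (cases "i < k")
            case True
            then show ?thesis using pc ns len unfolding pclosed_def by (simp add: ps'_def nth_append)
          next
            case False
            then have "i = k" using i len by (simp add: ps'_def)
            then show ?thesis using Pa len by (simp add: ps'_def nth_append)
          qed
        qed
        show "\<forall>i<Suc k. \<forall>w\<in>V - set (take i ps'). \<not> labf ps' i (ps'!i) < labf ps' i w"
        proof (intro allI impI ballI)
          fix i w assume i: "i < Suc k" and w: "w \<in> V - set (take i ps')"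
          have lab: "labf ps' i = labf ps i" using pre[of i ps "[a]"] i len by (auto simp: ps'_def)
          show "\<not> labf ps' i (ps'!i) < labf ps' i w"
          proof (cases "i < k")
            case True
            then show ?thesis using sc[of i w] w lab len by (simp add: ps'_def nth_append)
          next
            case False
            then have "i = k" using i by simp
            then have "w \<in> U" using w len by (simp add: ps'_def U_def)
            then show ?thesis using amax[of w] lab \<open>i = k\<close> len by (simp add: ps'_def nth_append not_less)
          qed
        qed
      qed
      then show ?thesis by blast
    qed
  qed
  then obtain \<tau> where G: "Good n \<tau>" by blast
  have len: "length \<tau> = n" and dt: "distinct \<tau>" and tV: "set \<tau> \<subseteq> V" and pc: "pclosed \<tau>"
    and sc: "\<forall>i<n. \<forall>w \<in> V - set (take i \<tau>). \<not> labf \<tau> i (\<tau>!i) < labf \<tau> i w"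
    using G unfolding Good_def by auto
  have "\<sigma> \<noteq> []" using sV setV by auto
  then have n0: "0 < n" by (simp add: n_def)
  have t0: "\<tau>!0 = s" using G n0 unfolding Good_def by auto
  have "card (set \<tau>) = card V" using dt len nV by (simp add: distinct_card)
  then have tset: "set \<tau> = V" using card_subset_eq[OF finV tV] by simp
  have so: "search_order V (labf \<tau>) \<tau>"
    unfolding search_order_def lex_less_iff using dt tset sc len by simp
  have par: "\<tau> ! (GREATEST j. j < i \<and> E (\<tau>!i) (\<tau>!j)) = P (\<tau>!i)" if i: "0 < i" "i < length \<tau>" for i
  proof -
    define w where "w = \<tau>!i"
    have wV: "w \<in> V" using tset i by (auto simp: w_def)
    have ws: "w \<noteq> s"
    proof
      assume "w = s"
      then have "\<tau>!i = \<tau>!0" using t0 by (simp add: w_def)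
      moreover have "0 < length \<tau>" using i(2) by linarith
      ultimately show False using nth_eq_iff_index_eq[OF dt i(2) \<open>0 < length \<tau>\<close>] i(1) by simp
    qed
    have f1: "P w \<in> V" "E w (P w)" "pos (P w) < pos w" using F1[OF wV ws] by auto
    have "\<tau>!i \<noteq> s" using ws by (simp add: w_def)
    then have "P (\<tau>!i) \<in> set (take i \<tau>)" using pc i(2) unfolding pclosed_def by blast
    then have "P w \<in> set (take i \<tau>)" by (simp add: w_def)
    from in_take_nth[OF this] obtain jp where jp: "jp < i" "\<tau>!jp = P w" by blast
    have "(GREATEST j. j < i \<and> E (\<tau>!i) (\<tau>!j)) = jp"
    proof (rule Greatest_equality)
      show "jp < i \<and> E (\<tau>!i) (\<tau>!jp)" using jp f1 by (simp add: w_def)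
    next
      fix j assume j: "j < i \<and> E (\<tau>!i) (\<tau>!j)"
      define x where "x = \<tau>!j"
      have jl: "j < length \<tau>" using j i by simp
      have xV: "x \<in> V" using tset jl by (auto simp: x_def)
      have wx: "E w x" using j by (simp add: w_def x_def)
      have xw: "x \<noteq> w" using nth_eq_iff_index_eq[OF dt jl i(2)] j by (simp add: x_def w_def)
      have "\<not> pos w < pos x"
      proof
        assume "pos w < pos x"
        then have "R\<^sup>+\<^sup>+ w x" using A1[OF xV wx] by blast
        then have "before \<tau> w x" using before_Rt[OF _ pc dt] jl by (simp add: x_def)
        then obtain i' j' where ij': "i' < j'" "j' < length \<tau>" "\<tau>!i' = w" "\<tau>!j' = x"
          unfolding before_def by blast
        have "i' < length \<tau>" using ij' by simp
        then have "i' = i" using nth_eq_iff_index_eq[OF dt \<open>i' < length \<tau>\<close> i(2)] ij'(3) by (simp add: w_def)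
        moreover have "j' = j" using nth_eq_iff_index_eq[OF dt ij'(2) jl] ij'(4) by (simp add: x_def)
        ultimately show False using ij' j by simp
      qed
      moreover have "pos x \<noteq> pos w" using pos_inj[OF xV wV] xw by blast
      ultimately have "pos x < pos w" by simp
      then have "R\<^sup>+\<^sup>+ x w" using A1[OF wV Esym[OF wx]] by blast
      then have "R x w \<or> (\<exists>y. R\<^sup>+\<^sup>+ x y \<and> R y w)" by (blast elim: tranclp.cases)
      then have "x = P w \<or> R\<^sup>+\<^sup>+ x (P w)" by (auto simp: R_def)
      then show "j \<le> jp"
      proof
        assume "x = P w"
        have "jp < length \<tau>" using jp i by simp
        then show ?thesis using nth_eq_iff_index_eq[OF dt jl \<open>jp < length \<tau>\<close>] jp(2) \<open>x = P w\<close> by (simp add: x_def)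
      next
        assume "R\<^sup>+\<^sup>+ x (P w)"
        then have "before \<tau> x (P w)" using before_Rt[OF _ pc dt] tset f1 by blast
        then obtain i' j' where ij': "i' < j'" "j' < length \<tau>" "\<tau>!i' = x" "\<tau>!j' = P w"
          unfolding before_def by blast
        have "i' < length \<tau>" using ij' by simp
        then have "i' = j" using nth_eq_iff_index_eq[OF dt \<open>i' < length \<tau>\<close> jl] ij'(3) by (simp add: x_def)
        moreover have "jp < length \<tau>" using jp i by simp
        then have "j' = jp" using nth_eq_iff_index_eq[OF dt ij'(2) \<open>jp < length \<tau>\<close>] ij'(4) jp(2) by simp
        ultimately show ?thesis using ij' by simp
      qed
    qed
    then show ?thesis using jp by (simp add: w_def)
  qed
  have parS: "\<sigma> ! (GREATEST j. j < i \<and> E (\<sigma>!i) (\<sigma>!j)) = P (\<sigma>!i)" if i: "0 < i" "i < length \<sigma>" for i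
    using pos_nth[OF i(2)] by (simp add: P_def gi_def)
  have "L_tree E \<tau> = {{w, P w} | w. w \<in> V \<and> w \<noteq> s}"
    by (rule L_tree_alt[OF dt tset t0 _ par]) (use len n0 in auto)
  moreover have "L_tree E \<sigma> = {{w, P w} | w. w \<in> V \<and> w \<noteq> s}"
    by (rule L_tree_alt[OF dist setV s0 _ parS]) (use n0 n_def in auto)
  ultimately show ?thesis using so t0 by auto
qed

end

context gr begin

lemma s_in_take: "0 < i \<Longrightarrow> ps \<noteq> [] \<Longrightarrow> ps!0 = s \<Longrightarrow> s \<in> set (take i ps)"
  by (cases ps; cases i) auto

lemma len_le_card: "distinct ps \<Longrightarrow> set ps \<subseteq> V \<Longrightarrow> length ps \<le> card V"
proof -
  assume d: "distinct ps" and sub: "set ps \<subseteq> V"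
  have "card (set ps) \<le> card V" by (rule card_mono[OF finV sub])
  then show ?thesis using distinct_card[OF d] by simp
qed

lemma dfs_to_bfs:
  assumes ch: "chordal V E" and sV: "s \<in> V" and so: "lexdfs_order V E s \<sigma>" and s0: "\<sigma>!0 = s"
  shows "\<exists>\<tau>. lexbfs_order V E s \<tau> \<and> \<tau>!0 = s \<and> L_tree E \<tau> = L_tree E \<sigma>"
proof -
  have so': "search_order V (lexdfs_label E s \<sigma>) \<sigma>" using so by (simp add: lexdfs_order_def)
  have dist: "distinct \<sigma>" and setV: "set \<sigma> = V" using so' by (auto simp: search_order_def)
  have ne: "\<sigma> \<noteq> []" using setV sV by auto
  have A: "gsearch \<sigma> \<and> revPEO \<sigma>"
  proof (rule thmA[OF ch so' s0 sV])
    fix i u w assume "0 < i" "i \<le> length \<sigma>" "u \<notin> set (take i \<sigma>)" "w \<notin> set (take i \<sigma>)"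
      "u \<noteq> s" "w \<noteq> s" "Nb E \<sigma> i u \<subset> Nb E \<sigma> i w"
    then show "lexdfs_label E s \<sigma> i u < lexdfs_label E s \<sigma> i w"
      by (intro mp[OF conjunct2[OF dfs_mono]])
  qed
  interpret ordl V E \<sigma> s
    using dist setV s0 sV A by unfold_locales auto
  have m: "lexbfs_label E s (card V) ps i u \<le> lexbfs_label E s (card V) ps i w"
    if a: "distinct ps" "set ps \<subseteq> V" "0 < i" "i \<le> length ps" "ps!0 = s"
      "u \<notin> set (take i ps)" "w \<notin> set (take i ps)" "Nb E ps i u \<subseteq> Nb E ps i w" for ps i u w
  proof -
    have "ps \<noteq> []" using a(3,4) by auto
    then have "s \<in> set (take i ps)" using s_in_take[OF a(3) _ a(5)] by simp
    then have "u \<noteq> s" "w \<noteq> s" using a(6,7) by auto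
    moreover have "i \<le> card V" using len_le_card[OF a(1,2)] a(4) by simp
    ultimately show "lexbfs_label E s (card V) ps i u \<le> lexbfs_label E s (card V) ps i w"
      using a(6,7,8) by (intro mp[OF conjunct1[OF bfs_mono]])
  qed
  have ini: "lexbfs_label E s (card V) ps 0 v < lexbfs_label E s (card V) ps 0 s" if "v \<noteq> s" for ps :: "'a list" and v
    using that by (simp add: list_less_def)
  have "\<exists>\<tau>. search_order V (lexbfs_label E s (card V) \<tau>) \<tau> \<and> \<tau>!0 = s \<and> L_tree E \<tau> = L_tree E \<sigma>"
    by (rule thmB[where labf = "lexbfs_label E s (card V)", OF m bfs_prefix ini])
  then show ?thesis by (simp add: lexbfs_order_def)
qed

lemma bfs_to_dfs:
  assumes ch: "chordal V E" and sV: "s \<in> V" and so: "lexbfs_order V E s \<sigma>" and s0: "\<sigma>!0 = s"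
  shows "\<exists>\<tau>. lexdfs_order V E s \<tau> \<and> \<tau>!0 = s \<and> L_tree E \<tau> = L_tree E \<sigma>"
proof -
  have so': "search_order V (lexbfs_label E s (card V) \<sigma>) \<sigma>" using so by (simp add: lexbfs_order_def)
  have dist: "distinct \<sigma>" and setV: "set \<sigma> = V" using so' by (auto simp: search_order_def)
  have lenV: "length \<sigma> = card V" using distinct_card[OF dist] setV by simp
  have A: "gsearch \<sigma> \<and> revPEO \<sigma>"
  proof (rule thmA[OF ch so' s0 sV])
    fix i u w assume a: "0 < i" "i \<le> length \<sigma>" "u \<notin> set (take i \<sigma>)" "w \<notin> set (take i \<sigma>)"
      "u \<noteq> s" "w \<noteq> s" "Nb E \<sigma> i u \<subset> Nb E \<sigma> i w"
    have "i \<le> card V" using a(2) lenV by simp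
    then show "lexbfs_label E s (card V) \<sigma> i u < lexbfs_label E s (card V) \<sigma> i w"
      using a by (intro mp[OF conjunct2[OF bfs_mono]])
  qed
  interpret ordl V E \<sigma> s
    using dist setV s0 sV A by unfold_locales auto
  have m: "lexdfs_label E s ps i u \<le> lexdfs_label E s ps i w"
    if a: "distinct ps" "set ps \<subseteq> V" "0 < i" "i \<le> length ps" "ps!0 = s"
      "u \<notin> set (take i ps)" "w \<notin> set (take i ps)" "Nb E ps i u \<subseteq> Nb E ps i w" for ps i u w
  proof -
    have "ps \<noteq> []" using a(3,4) by auto
    then have "s \<in> set (take i ps)" using s_in_take[OF a(3) _ a(5)] by simp
    then have "u \<noteq> s" "w \<noteq> s" using a(6,7) by auto
    then show "lexdfs_label E s ps i u \<le> lexdfs_label E s ps i w"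
      using a(6,7,8) by (intro mp[OF conjunct1[OF dfs_mono]])
  qed
  have ini: "lexdfs_label E s ps 0 v < lexdfs_label E s ps 0 s" if "v \<noteq> s" for ps :: "'a list" and v
    using that by (simp add: list_less_def)
  have "\<exists>\<tau>. search_order V (lexdfs_label E s \<tau>) \<tau> \<and> \<tau>!0 = s \<and> L_tree E \<tau> = L_tree E \<sigma>"
    by (rule thmB[where labf = "lexdfs_label E s", OF m dfs_prefix ini])
  then show ?thesis by (simp add: lexdfs_order_def)
qed

end

theorem corollary15:
  fixes V :: "'a set" and E :: "'a \<Rightarrow> 'a \<Rightarrow> bool" and s :: 'a and T :: "'a set set"
  assumes "graph V E" and "chordal V E" and "s \<in> V" and "spanning_tree V E T"
  shows "is_L_tree_of_LexDFS V E s T \<longleftrightarrow> is_L_tree_of_LexBFS V E s T"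
proof -
  interpret gr V E using assms(1) by unfold_locales
  show ?thesis
  proof
    assume "is_L_tree_of_LexDFS V E s T"
    then obtain \<sigma> where \<sigma>: "lexdfs_order V E s \<sigma>" "\<sigma>!0 = s" "L_tree E \<sigma> = T"
      by (auto simp: is_L_tree_of_LexDFS_def)
    from dfs_to_bfs[OF assms(2,3) \<sigma>(1,2)] \<sigma>(3) show "is_L_tree_of_LexBFS V E s T"
      by (auto simp: is_L_tree_of_LexBFS_def)
  next
    assume "is_L_tree_of_LexBFS V E s T"
    then obtain \<sigma> where \<sigma>: "lexbfs_order V E s \<sigma>" "\<sigma>!0 = s" "L_tree E \<sigma> = T"
      by (auto simp: is_L_tree_of_LexBFS_def)
    from bfs_to_dfs[OF assms(2,3) \<sigma>(1,2)] \<sigma>(3) show "is_L_tree_of_LexDFS V E s T"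
      by (auto simp: is_L_tree_of_LexDFS_def)
  qed
qed

end
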